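(* Let $\lambda>0$, $\gamma>0$, $\beta\ge 0$. Let $X$ be the Banach space of bounded analytic functions $h:[0,\lambda]\to\mathbb{R}$ with the supremum norm $\|h\|_\infty=\sup\{|h(x)|:0\le x\le\lambda\}$, and $K=\{h\in X: h\ge 0,\ \|h\|_\infty\le 1\}$. For $h\in K$ let $\Psi_h=1+\beta h$. Then for $h\in K$ the only solution $y$ of the linear problem \begin{align*} &[\Psi_h(\eta)y'(\eta)]'+2\eta y'(\eta)=0,\quad 0<\eta<\lambda,\\ &\Psi_h(0)y'(0)-\gamma y(0)=0,\\ &y(\lambda)=1, \end{align*} is given by $$y(\eta)=D_h\left(\frac1\gamma+\int_0^\eta\frac{\exp\left(-2\int_0^x\frac{\xi}{\Psi_h(\xi)}d\xi\right)}{\Psi_h(x)}\,dx\right),\quad 0<\eta<\lambda,$$ where $$D_h=\gamma\left(1+\gamma\int_0^\lambda\frac{\exp\left(-2\int_0^x\frac{\xi}{\Psi_h(\xi)}d\xi\right)}{\Psi_h(x)}\,dx\right)^{-1}.$$ Moreover, $y\in K$. *)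

theory Defs
  imports "HOL-Analysis.Analysis"
begin

definition real_analytic_on :: "(real \<Rightarrow> real) \<Rightarrow> real set \<Rightarrow> bool" where
  "real_analytic_on h S \<longleftrightarrow>
     (\<forall>x\<in>S. \<exists>r>0. \<exists>a::nat \<Rightarrow> real.
        \<forall>y\<in>S. \<bar>y - x\<bar> < r \<longrightarrow> (\<lambda>n. a n * (y - x) ^ n) sums h y)"

text \<open>The space X: bounded analytic functions on [0,lam] (only values on [0,lam] matter).\<close>
definition Xspace :: "real \<Rightarrow> (real \<Rightarrow> real) set" where
  "Xspace lam = {h. real_analytic_on h {0..lam} \<and> bounded (h ` {0..lam})}"

definition supnorm :: "real \<Rightarrow> (real \<Rightarrow> real) \<Rightarrow> real" where
  "supnorm lam h = (SUP x\<in>{0..lam}. \<bar>h x\<bar>)"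

definition Kset :: "real \<Rightarrow> (real \<Rightarrow> real) set" where
  "Kset lam = {h \<in> Xspace lam. (\<forall>x\<in>{0..lam}. h x \<ge> 0) \<and> supnorm lam h \<le> 1}"

definition Psi :: "real \<Rightarrow> (real \<Rightarrow> real) \<Rightarrow> real \<Rightarrow> real" where
  "Psi \<beta> h \<eta> = 1 + \<beta> * h \<eta>"

definition solves_bvp :: "real \<Rightarrow> real \<Rightarrow> real \<Rightarrow> (real \<Rightarrow> real) \<Rightarrow> (real \<Rightarrow> real) \<Rightarrow> bool" where
  "solves_bvp lam \<beta> \<gamma> h y \<longleftrightarrow>
     continuous_on {0..lam} y \<and>
     (\<exists>y' w. (\<forall>x\<in>{0..<lam}. (y has_real_derivative y' x) (at x within {0..lam})) \<and>
            (\<forall>x\<in>{0<..<lam}. ((\<lambda>t. Psi \<beta> h t * y' t) has_real_derivative w x) (at x)) \<and>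
            (\<forall>x\<in>{0<..<lam}. w x + 2 * x * y' x = 0) \<and>
            Psi \<beta> h 0 * y' 0 - \<gamma> * y 0 = 0) \<and>
     y lam = 1"

definition Ifun :: "real \<Rightarrow> (real \<Rightarrow> real) \<Rightarrow> real \<Rightarrow> real" where
  "Ifun \<beta> h x = exp (- 2 * integral {0..x} (\<lambda>\<xi>. \<xi> / Psi \<beta> h \<xi>)) / Psi \<beta> h x"

definition Dconst :: "real \<Rightarrow> real \<Rightarrow> real \<Rightarrow> (real \<Rightarrow> real) \<Rightarrow> real" where
  "Dconst lam \<beta> \<gamma> h = \<gamma> * inverse (1 + \<gamma> * integral {0..lam} (Ifun \<beta> h))"

definition yformula :: "real \<Rightarrow> real \<Rightarrow> real \<Rightarrow> (real \<Rightarrow> real) \<Rightarrow> real \<Rightarrow> real" where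
  "yformula lam \<beta> \<gamma> h \<eta> = Dconst lam \<beta> \<gamma> h * (1 / \<gamma> + integral {0..\<eta>} (Ifun \<beta> h))"

end

theory Submission
  imports Defs "HOL-Complex_Analysis.Cauchy_Integral_Formula"
begin


definition hrep :: "real set \<Rightarrow> (real \<Rightarrow> real) \<Rightarrow> real \<Rightarrow> bool" where
  "hrep S f x \<longleftrightarrow> (\<exists>r>0. \<exists>g. g holomorphic_on ball (complex_of_real x) r \<and>
      (\<forall>y\<in>S. \<bar>y - x\<bar> < r \<longrightarrow> g (complex_of_real y) = complex_of_real (f y)))"

lemma hrep_cong: "hrep S f x \<Longrightarrow> (\<And>t. t \<in> S \<Longrightarrow> f t = f' t) \<Longrightarrow> hrep S f' x"
  unfolding hrep_def by metis

lemma hrep_const: "hrep S (\<lambda>_. c) x"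
  unfolding hrep_def
  by (rule exI[of _ 1], simp, rule exI[of _ "\<lambda>_. complex_of_real c"], simp)

lemma hrep_id: "hrep S (\<lambda>t. t) x"
  unfolding hrep_def
  by (rule exI[of _ 1], simp, rule exI[of _ "\<lambda>z. z"], simp)

lemma hrep_add:
  assumes "hrep S f x" "hrep S g x" shows "hrep S (\<lambda>t. f t + g t) x"
proof -
  obtain r1 g1 where 1: "r1 > 0" "g1 holomorphic_on ball (complex_of_real x) r1"
    "\<forall>y\<in>S. \<bar>y - x\<bar> < r1 \<longrightarrow> g1 (complex_of_real y) = complex_of_real (f y)"
    using assms(1) unfolding hrep_def by blast
  obtain r2 g2 where 2: "r2 > 0" "g2 holomorphic_on ball (complex_of_real x) r2"
    "\<forall>y\<in>S. \<bar>y - x\<bar> < r2 \<longrightarrow> g2 (complex_of_real y) = complex_of_real (g y)"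
    using assms(2) unfolding hrep_def by blast
  show ?thesis unfolding hrep_def
  proof (intro exI conjI)
    show "min r1 r2 > 0" using 1 2 by simp
    show "(\<lambda>z. g1 z + g2 z) holomorphic_on ball (complex_of_real x) (min r1 r2)"
      by (intro holomorphic_intros holomorphic_on_subset[OF 1(2)] holomorphic_on_subset[OF 2(2)]) auto
    show "\<forall>y\<in>S. \<bar>y - x\<bar> < min r1 r2 \<longrightarrow> g1 (complex_of_real y) + g2 (complex_of_real y) = complex_of_real (f y + g y)"
      using 1(3) 2(3) by simp
  qed
qed

lemma hrep_mult:
  assumes "hrep S f x" "hrep S g x" shows "hrep S (\<lambda>t. f t * g t) x"
proof -
  obtain r1 g1 where 1: "r1 > 0" "g1 holomorphic_on ball (complex_of_real x) r1"
    "\<forall>y\<in>S. \<bar>y - x\<bar> < r1 \<longrightarrow> g1 (complex_of_real y) = complex_of_real (f y)"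
    using assms(1) unfolding hrep_def by blast
  obtain r2 g2 where 2: "r2 > 0" "g2 holomorphic_on ball (complex_of_real x) r2"
    "\<forall>y\<in>S. \<bar>y - x\<bar> < r2 \<longrightarrow> g2 (complex_of_real y) = complex_of_real (g y)"
    using assms(2) unfolding hrep_def by blast
  show ?thesis unfolding hrep_def
  proof (intro exI conjI)
    show "min r1 r2 > 0" using 1 2 by simp
    show "(\<lambda>z. g1 z * g2 z) holomorphic_on ball (complex_of_real x) (min r1 r2)"
      by (intro holomorphic_intros holomorphic_on_subset[OF 1(2)] holomorphic_on_subset[OF 2(2)]) auto
    show "\<forall>y\<in>S. \<bar>y - x\<bar> < min r1 r2 \<longrightarrow> g1 (complex_of_real y) * g2 (complex_of_real y) = complex_of_real (f y * g y)"
      using 1(3) 2(3) by simp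
  qed
qed

lemma hrep_exp:
  assumes "hrep S f x" shows "hrep S (\<lambda>t. exp (f t)) x"
proof -
  obtain r1 g1 where 1: "r1 > 0" "g1 holomorphic_on ball (complex_of_real x) r1"
    "\<forall>y\<in>S. \<bar>y - x\<bar> < r1 \<longrightarrow> g1 (complex_of_real y) = complex_of_real (f y)"
    using assms(1) unfolding hrep_def by blast
  show ?thesis unfolding hrep_def
  proof (intro exI conjI)
    show "r1 > 0" using 1 by simp
    show "(\<lambda>z. exp (g1 z)) holomorphic_on ball (complex_of_real x) r1"
      by (intro holomorphic_intros 1(2))
    show "\<forall>y\<in>S. \<bar>y - x\<bar> < r1 \<longrightarrow> exp (g1 (complex_of_real y)) = complex_of_real (exp (f y))"
      using 1(3) by (simp add: exp_of_real)
  qed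
qed

lemma hrep_inverse:
  assumes "hrep S f x" "f x \<noteq> 0" "x \<in> S" shows "hrep S (\<lambda>t. inverse (f t)) x"
proof -
  obtain r1 g1 where 1: "r1 > 0" "g1 holomorphic_on ball (complex_of_real x) r1"
    "\<forall>y\<in>S. \<bar>y - x\<bar> < r1 \<longrightarrow> g1 (complex_of_real y) = complex_of_real (f y)"
    using assms(1) unfolding hrep_def by blast
  have gx: "g1 (complex_of_real x) \<noteq> 0" using 1(1,3) assms(2,3) by simp
  have cg: "isCont g1 (complex_of_real x)"
    using 1 by (intro field_differentiable_imp_continuous_at holomorphic_on_imp_differentiable_at[OF 1(2)]) auto
  obtain e where e: "e > 0" "\<forall>z. dist (complex_of_real x) z < e \<longrightarrow> g1 z \<noteq> 0"
    using continuous_at_avoid[of "complex_of_real x" g1 0] cg gx by blast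
  show ?thesis unfolding hrep_def
  proof (intro exI conjI)
    show "min r1 e > 0" using 1 e by simp
    show "(\<lambda>z. inverse (g1 z)) holomorphic_on ball (complex_of_real x) (min r1 e)"
      by (intro holomorphic_intros holomorphic_on_subset[OF 1(2)]) (use e in auto)
    show "\<forall>y\<in>S. \<bar>y - x\<bar> < min r1 e \<longrightarrow> inverse (g1 (complex_of_real y)) = complex_of_real (inverse (f y))"
      using 1(3) by simp
  qed
qed

lemma hrep_cont:
  assumes "\<And>x. x \<in> S \<Longrightarrow> hrep S f x" shows "continuous_on S f"
proof -
  have "continuous (at x within S) f" if x: "x \<in> S" for x
  proof -
    obtain r1 g1 where 1: "r1 > 0" "g1 holomorphic_on ball (complex_of_real x) r1"
      "\<forall>y\<in>S. \<bar>y - x\<bar> < r1 \<longrightarrow> g1 (complex_of_real y) = complex_of_real (f y)"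
      using assms[OF x] unfolding hrep_def by blast
    have "isCont g1 (complex_of_real x)"
      using 1 by (intro field_differentiable_imp_continuous_at holomorphic_on_imp_differentiable_at[OF 1(2)]) auto
    hence "isCont (\<lambda>t. Re (g1 (complex_of_real t))) x"
      using continuous_at_compose[of x complex_of_real g1] continuous_Re[of "at x" "\<lambda>t. g1 (complex_of_real t)"]
      by (simp add: o_def continuous_of_real continuous_ident)
    hence "continuous (at x within S) (\<lambda>t. Re (g1 (complex_of_real t)))"
      using continuous_at_imp_continuous_at_within by blast
    then show ?thesis
      by (rule continuous_transform_within[OF _ 1(1) x]) (use 1(3) in \<open>auto simp: dist_real_def\<close>)
  qed
  then show ?thesis using continuous_on_eq_continuous_within by blast
qed


lemma analytic_hrep:
  assumes "real_analytic_on f {0..lam}" "lam > 0" "x \<in> {0..lam}"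
  shows "hrep {0..lam} f x"
proof -
  obtain r a where r: "r > 0" "\<forall>y\<in>{0..lam}. \<bar>y - x\<bar> < r \<longrightarrow> (\<lambda>n. a n * (y - x) ^ n) sums f y"
    using assms(1,3) unfolding real_analytic_on_def by blast
  obtain y0 where y0: "y0 \<in> {0..lam}" "y0 \<noteq> x" "\<bar>y0 - x\<bar> < r"
  proof (cases "x < lam")
    case True
    show ?thesis by (rule that[of "x + min r (lam - x) / 2"]) (use True r(1) assms(3) in \<open>auto simp: min_def field_simps\<close>)
  next
    case False
    show ?thesis by (rule that[of "x - min r lam / 2"]) (use False r(1) assms(2,3) in \<open>auto simp: min_def field_simps\<close>)
  qed
  define d where "d = \<bar>y0 - x\<bar>"
  have d: "d > 0" "d < r" using y0 d_def by auto
  define K where "K = complex_of_real (y0 - x)"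
  define c where "c = (\<lambda>n. complex_of_real (a n))"
  have "summable (\<lambda>n. a n * (y0 - x) ^ n)" using r y0 sums_summable by blast
  hence smK: "summable (\<lambda>n. c n * K ^ n)"
    unfolding c_def K_def using summable_of_real_iff[of "\<lambda>n. a n * (y0 - x) ^ n", where 'a=complex]
    by simp
  define g where "g = (\<lambda>z. \<Sum>n. c n * (z - complex_of_real x) ^ n)"
  have "g holomorphic_on ball (complex_of_real x) d"
  proof (rule power_series_holomorphic[where a=c])
    fix w assume "w \<in> ball (complex_of_real x) d"
    hence "norm (w - complex_of_real x) < norm K"
      unfolding K_def norm_of_real by (simp add: d_def dist_norm norm_minus_commute)
    hence "summable (\<lambda>n. c n * (w - complex_of_real x) ^ n)"
      by (rule powser_inside[OF smK])
    thus "(\<lambda>n. c n * (w - complex_of_real x) ^ n) sums g w"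
      unfolding g_def by (rule summable_sums)
  qed
  moreover have "g (complex_of_real y) = complex_of_real (f y)" if "y \<in> {0..lam}" "\<bar>y - x\<bar> < d" for y
  proof -
    have "(\<lambda>n. a n * (y - x) ^ n) sums f y" using r that d by auto
    hence "(\<lambda>n. complex_of_real (a n * (y - x) ^ n)) sums complex_of_real (f y)"
      by (subst sums_of_real_iff)
    hence "(\<lambda>n. c n * (complex_of_real y - complex_of_real x) ^ n) sums complex_of_real (f y)"
      by (simp add: c_def)
    thus ?thesis unfolding g_def by (simp add: sums_iff)
  qed
  ultimately show ?thesis unfolding hrep_def using d by blast
qed


lemma Re_mult_real: "Re (c * complex_of_real r) = Re c * r" by simp

lemma hrep_analytic:
  assumes "\<And>x. x \<in> S \<Longrightarrow> hrep S f x"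
  shows "real_analytic_on f S"
  unfolding real_analytic_on_def
proof
  fix x assume x: "x \<in> S"
  obtain r g where 1: "r > 0" "g holomorphic_on ball (complex_of_real x) r"
    "\<forall>y\<in>S. \<bar>y - x\<bar> < r \<longrightarrow> g (complex_of_real y) = complex_of_real (f y)"
    using assms[OF x] unfolding hrep_def by blast
  define c where "c = (\<lambda>n. (deriv ^^ n) g (complex_of_real x) / fact n)"
  have "(\<lambda>n. Re (c n) * (y - x) ^ n) sums f y" if "y \<in> S" "\<bar>y - x\<bar> < r" for y
  proof -
    have "complex_of_real y \<in> ball (complex_of_real x) r"
      using that by (simp add: dist_norm abs_minus_commute flip: of_real_diff)
    from holomorphic_power_series[OF 1(2) this]
    have "(\<lambda>n. c n * (complex_of_real y - complex_of_real x) ^ n) sums complex_of_real (f y)"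
      using 1(3) that unfolding c_def by auto
    hence "(\<lambda>n. Re (c n * (complex_of_real y - complex_of_real x) ^ n)) sums Re (complex_of_real (f y))"
      by (subst (asm) sums_complex_iff) (rule conjunct1)
    moreover have eqn: "Re (c n * (complex_of_real y - complex_of_real x) ^ n) = Re (c n) * (y - x) ^ n" for n
    proof -
      have e: "(complex_of_real y - complex_of_real x) ^ n = complex_of_real ((y - x) ^ n)"
        by (subst of_real_diff[symmetric], subst of_real_power[symmetric], rule refl)
      have "Re (c n * complex_of_real ((y - x) ^ n)) = Re (c n) * (y - x) ^ n"
        by (rule Re_mult_real)
      thus ?thesis by (subst e)
    qed
    ultimately show ?thesis by (simp only: eqn Re_complex_of_real)
  qed
  hence "\<forall>y\<in>S. \<bar>y - x\<bar> < r \<longrightarrow> (\<lambda>n. Re (c n) * (y - x) ^ n) sums f y" by blast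
  thus "\<exists>r>0. \<exists>a. \<forall>y\<in>S. \<bar>y - x\<bar> < r \<longrightarrow> (\<lambda>n. a n * (y - x) ^ n) sums f y"
    using 1(1) by (intro exI[of _ r] conjI exI[of _ "\<lambda>n. Re (c n)"]) auto
qed


lemma hrep_integral:
  assumes cf: "continuous_on {a..b} f" and hf: "hrep {a..b} f x" and x: "x \<in> {a..b}"
  shows "hrep {a..b} (\<lambda>t. integral {a..t} f) x"
proof -
  obtain r g where 1: "r > 0" "g holomorphic_on ball (complex_of_real x) r"
    "\<forall>y\<in>{a..b}. \<bar>y - x\<bar> < r \<longrightarrow> g (complex_of_real y) = complex_of_real (f y)"
    using hf unfolding hrep_def by blast
  obtain G where G: "\<And>z. z \<in> ball (complex_of_real x) r \<Longrightarrow> (G has_field_derivative g z) (at z within ball (complex_of_real x) r)"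
    by (rule holomorphic_convex_primitive'[OF convex_ball open_ball 1(2)]) iprover
  have G': "(G has_field_derivative g z) (at z)" if "z \<in> ball (complex_of_real x) r" for z
    using G[OF that] at_within_open[OF that open_ball] by (simp only:)
  define F where "F = (\<lambda>t. integral {a..t} f)"
  define H where "H = (\<lambda>z. G z - G (complex_of_real x) + complex_of_real (F x))"
  have H': "(H has_field_derivative g z) (at z)" if "z \<in> ball (complex_of_real x) r" for z
    unfolding H_def using G'[OF that] by (auto intro!: derivative_eq_intros)
  have Hh: "H holomorphic_on ball (complex_of_real x) r"
    unfolding holomorphic_on_open[OF open_ball] using H' by blast
  define T where "T = {a..b} \<inter> {x - r<..<x + r}"
  have cT: "convex T" unfolding T_def by (intro convex_Int convex_real_interval)
  define \<phi> where "\<phi> = (\<lambda>t. H (complex_of_real t) - complex_of_real (F t))"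
  have "(\<phi> has_vector_derivative 0) (at t within T)" if t: "t \<in> T" for t
  proof -
    have tb: "complex_of_real t \<in> ball (complex_of_real x) r"
      using t by (auto simp: T_def dist_norm abs_less_iff simp flip: of_real_diff)
    have A: "((\<lambda>t. H (complex_of_real t)) has_vector_derivative g (complex_of_real t)) (at t within T)"
      by (rule has_vector_derivative_real_field[OF H'[OF tb]])
    have "(F has_vector_derivative f t) (at t within {a..b})"
      unfolding F_def by (rule integral_has_vector_derivative[OF cf]) (use t T_def in auto)
    hence "(F has_field_derivative f t) (at t within {a..b})"
      by (simp add: has_real_derivative_iff_has_vector_derivative)
    hence "(F has_field_derivative f t) (at t within T)"
      by (rule DERIV_subset) (auto simp: T_def)
    hence B: "((\<lambda>t. complex_of_real (F t)) has_vector_derivative complex_of_real (f t)) (at t within T)"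
      by (rule has_vector_derivative_of_real)
    have "g (complex_of_real t) = complex_of_real (f t)"
      using 1(3) t by (auto simp: T_def abs_less_iff)
    thus ?thesis unfolding \<phi>_def using has_vector_derivative_diff[OF A B] by simp
  qed
  then obtain c where c: "\<And>t. t \<in> T \<Longrightarrow> \<phi> t = c"
    by (rule has_vector_derivative_zero_constant[OF cT]) iprover+
  have xT: "x \<in> T" using x 1(1) by (auto simp: T_def)
  have "c = 0" using c[OF xT] by (simp add: \<phi>_def H_def)
  show ?thesis unfolding hrep_def
  proof (intro exI conjI)
    show "r > 0" by (rule 1(1))
    show "H holomorphic_on ball (complex_of_real x) r" by (rule Hh)
    show "\<forall>y\<in>{a..b}. \<bar>y - x\<bar> < r \<longrightarrow> H (complex_of_real y) = complex_of_real (integral {a..y} f)"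
    proof (intro ballI impI)
      fix y assume "y \<in> {a..b}" "\<bar>y - x\<bar> < r"
      hence "y \<in> T" by (auto simp: T_def abs_less_iff)
      thus "H (complex_of_real y) = complex_of_real (integral {a..y} f)"
        using c \<open>c = 0\<close> by (force simp: \<phi>_def F_def)
    qed
  qed
qed




theorem lemma3p1:
  fixes lam \<beta> \<gamma> :: real and h :: "real \<Rightarrow> real"
  assumes "lam > 0" and "\<gamma> > 0" and "\<beta> \<ge> 0"
    and "h \<in> Kset lam"
  shows "(\<forall>y. solves_bvp lam \<beta> \<gamma> h y \<longleftrightarrow> (\<forall>\<eta>\<in>{0..lam}. y \<eta> = yformula lam \<beta> \<gamma> h \<eta>))
         \<and> yformula lam \<beta> \<gamma> h \<in> Kset lam"
proof -
  note lam = assms(1) and gam = assms(2) and bet = assms(3)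
  define S where "S = {0..lam}"
  have hA: "real_analytic_on h S" and hnn: "\<And>x. x \<in> S \<Longrightarrow> h x \<ge> 0"
    using assms(4) by (auto simp: Kset_def Xspace_def S_def)
  have hh: "hrep S h x" if "x \<in> S" for x
    using analytic_hrep[of h lam x] hA lam that by (simp add: S_def)
  define P where "P = Psi \<beta> h"
  have Pge: "P x \<ge> 1" if "x \<in> S" for x
    using hnn[OF that] bet by (simp add: P_def Psi_def)
  have Pne: "P x \<noteq> 0" if "x \<in> S" for x using Pge[OF that] by linarith
  have hP: "hrep S P x" if "x \<in> S" for x
    by (rule hrep_cong[OF hrep_add[OF hrep_const hrep_mult[OF hrep_const hh[OF that]]]])
       (simp add: P_def Psi_def)
  define q where "q = (\<lambda>\<xi>. \<xi> / P \<xi>)"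
  have hq: "hrep S q x" if "x \<in> S" for x
    by (rule hrep_cong[OF hrep_mult[OF hrep_id hrep_inverse[OF hP[OF that] Pne[OF that] that]]])
       (simp add: q_def divide_inverse)
  have cq: "continuous_on S q" by (rule hrep_cont[OF hq])
  define F where "F = (\<lambda>x. integral {0..x} q)"
  have hF: "hrep S F x" if "x \<in> S" for x
    unfolding F_def using hrep_integral[of 0 lam q x] cq hq[OF that] that by (simp add: S_def)
  define I where "I = Ifun \<beta> h"
  have I_eq: "I x = exp (-2 * F x) / P x" for x
    by (simp add: I_def Ifun_def F_def q_def P_def)
  have hI: "hrep S I x" if "x \<in> S" for x
    by (rule hrep_cong[OF hrep_mult[OF hrep_exp[OF hrep_mult[OF hrep_const[where c="-2"] hF[OF that]]]
          hrep_inverse[OF hP[OF that] Pne[OF that] that]]])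
       (simp add: I_eq divide_inverse)
  have cI: "continuous_on S I" by (rule hrep_cont[OF hI])
  define J where "J = (\<lambda>x. integral {0..x} I)"
  have hJ: "hrep S J x" if "x \<in> S" for x
    unfolding J_def using hrep_integral[of 0 lam I x] cI hI[OF that] that by (simp add: S_def)
  have cF: "continuous_on S F" by (rule hrep_cont[OF hF])
  have cJ: "continuous_on S J" by (rule hrep_cont[OF hJ])
  have dF: "(F has_real_derivative q x) (at x within S)" if "x \<in> S" for x
    using integral_has_vector_derivative[of 0 lam q x] cq that
    by (simp add: S_def F_def has_real_derivative_iff_has_vector_derivative)
  have dJ: "(J has_real_derivative I x) (at x within S)" if "x \<in> S" for x
    using integral_has_vector_derivative[of 0 lam I x] cI that
    by (simp add: S_def J_def has_real_derivative_iff_has_vector_derivative)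
  have intS: "interior S = {0<..<lam}" by (simp add: S_def)
  have dF': "(F has_real_derivative q x) (at x)" if "x \<in> {0<..<lam}" for x
    using dF[of x] that at_within_interior[of x S] intS by (auto simp: S_def)
  have dJ': "(J has_real_derivative I x) (at x)" if "x \<in> {0<..<lam}" for x
    using dJ[of x] that at_within_interior[of x S] intS by (auto simp: S_def)
  have Ipos: "I x > 0" if "x \<in> S" for x
    using Pge[OF that] by (simp add: I_eq)
  have J0: "J 0 = 0" by (simp add: J_def)
  have I0: "I 0 = 1 / P 0" by (simp add: I_eq F_def)
  have Jmono: "0 \<le> J x \<and> J x \<le> J lam" if "x \<in> S" for x
  proof -
    have int1: "I integrable_on {0..x}"
      by (rule integrable_continuous_interval, rule continuous_on_subset[OF cI]) (use that in \<open>auto simp: S_def\<close>)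
    have int2: "I integrable_on {x..lam}"
      by (rule integrable_continuous_interval, rule continuous_on_subset[OF cI]) (use that in \<open>auto simp: S_def\<close>)
    have int3: "I integrable_on {0..lam}"
      by (rule integrable_continuous_interval) (use cI in \<open>simp add: S_def\<close>)
    have "0 \<le> integral {0..x} I"
      by (rule integral_nonneg[OF int1]) (use Ipos that in \<open>fastforce simp: S_def\<close>)
    moreover have "0 \<le> integral {x..lam} I"
      by (rule integral_nonneg[OF int2]) (use Ipos that in \<open>(simp add: S_def), (meson order.trans less_imp_le)\<close>)
    moreover have "integral {0..x} I + integral {x..lam} I = integral {0..lam} I"
      using Henstock_Kurzweil_Integration.integral_combine[where a=0 and c=x and b=lam and f=I] that int3 by (auto simp: S_def)
    ultimately show ?thesis by (simp add: J_def)
  qed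
  define D where "D = Dconst lam \<beta> \<gamma> h"
  have Jl: "J lam \<ge> 0" using Jmono[of lam] lam by (simp add: S_def)
  have D_eq: "D = \<gamma> / (1 + \<gamma> * J lam)"
    by (simp add: D_def Dconst_def J_def I_def divide_inverse)
  have Dpos: "D > 0" unfolding D_eq using gam Jl by (simp add: add_pos_nonneg)
  have Dlam: "D * (1 / \<gamma> + J lam) = 1"
  proof -
    have "\<gamma> * J lam \<ge> 0" using gam Jl by simp
    hence "1 + \<gamma> * J lam > 0" by linarith
    moreover have "1 / \<gamma> + J lam = (1 + \<gamma> * J lam) / \<gamma>" using gam by (simp add: field_simps)
    ultimately show ?thesis unfolding D_eq using gam by simp
  qed
  have yf: "yformula lam \<beta> \<gamma> h = (\<lambda>\<eta>. D * (1 / \<gamma> + J \<eta>))"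
    by (simp add: fun_eq_iff yformula_def D_def J_def I_def)
  have hy: "hrep S (yformula lam \<beta> \<gamma> h) x" if "x \<in> S" for x
    unfolding yf by (rule hrep_mult[OF hrep_const hrep_add[OF hrep_const hJ[OF that]]])
  have cy: "continuous_on S (yformula lam \<beta> \<gamma> h)" by (rule hrep_cont[OF hy])
  have Kpart: "yformula lam \<beta> \<gamma> h \<in> Kset lam"
  proof -
    have an: "real_analytic_on (yformula lam \<beta> \<gamma> h) S" by (rule hrep_analytic[OF hy])
    have bd: "bounded (yformula lam \<beta> \<gamma> h ` S)"
      by (rule compact_imp_bounded, rule compact_continuous_image[OF cy]) (simp add: S_def)
    have ybd: "0 \<le> yformula lam \<beta> \<gamma> h x \<and> yformula lam \<beta> \<gamma> h x \<le> 1" if "x \<in> S" for x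
    proof -
      have "0 \<le> 1 / \<gamma> + J x" using Jmono[OF that] gam by simp
      moreover have "1 / \<gamma> + J x \<le> 1 / \<gamma> + J lam" using Jmono[OF that] by simp
      ultimately show ?thesis
        unfolding yf using Dpos Dlam mult_left_mono[of "1 / \<gamma> + J x" "1 / \<gamma> + J lam" D] by simp
    qed
    have "supnorm lam (yformula lam \<beta> \<gamma> h) \<le> 1"
      unfolding supnorm_def
      by (rule cSUP_least) (use lam ybd in \<open>auto simp: S_def\<close>)
    thus ?thesis using an bd ybd by (simp add: Kset_def Xspace_def S_def)
  qed
  have yS: "yformula lam \<beta> \<gamma> h \<eta> = D * (1 / \<gamma> + J \<eta>)" for \<eta> by (simp add: yf)
  have main: "solves_bvp lam \<beta> \<gamma> h y \<longleftrightarrow> (\<forall>\<eta>\<in>S. y \<eta> = yformula lam \<beta> \<gamma> h \<eta>)" for y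
  proof
    assume Y: "\<forall>\<eta>\<in>S. y \<eta> = yformula lam \<beta> \<gamma> h \<eta>"
    have c1: "continuous_on {0..lam} y"
      using continuous_on_cong[OF refl, of S y "yformula lam \<beta> \<gamma> h"] cy Y by (simp add: S_def)
    define y' where "y' = (\<lambda>x. D * I x)"
    define w where "w = (\<lambda>x. D * (exp (-2 * F x) * (-2 * q x)))"
    have d1: "(y has_real_derivative y' x) (at x within S)" if "x \<in> {0..<lam}" for x
    proof -
      have xS: "x \<in> S" using that by (simp add: S_def)
      have "((\<lambda>\<eta>. D * (1 / \<gamma> + J \<eta>)) has_real_derivative D * (0 + I x)) (at x within S)"
        by (intro DERIV_cmult DERIV_add DERIV_const dJ[OF xS])
      hence "((\<lambda>\<eta>. D * (1 / \<gamma> + J \<eta>)) has_real_derivative y' x) (at x within S)"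
        by (simp add: y'_def)
      thus ?thesis
        by (rule has_field_derivative_transform_within[OF _ zero_less_one xS])
           (use Y in \<open>simp_all add: yS S_def\<close>)
    qed
    have d2: "((\<lambda>t. Psi \<beta> h t * y' t) has_real_derivative w x) (at x)" if "x \<in> {0<..<lam}" for x
    proof -
      have "((\<lambda>t. D * exp (-2 * F t)) has_real_derivative D * (exp (-2 * F x) * (-2 * q x))) (at x)"
        by (intro DERIV_cmult DERIV_chain2[where f=exp and g="\<lambda>t. -2 * F t", OF DERIV_exp] DERIV_cmult dF'[OF that])
      hence "((\<lambda>t. D * exp (-2 * F t)) has_real_derivative w x) (at x)" by (simp add: w_def)
      thus ?thesis
      proof (rule has_field_derivative_transform_within_open[OF _ open_greaterThanLessThan that])
        fix t assume "t \<in> {0<..<lam}"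
        hence "P t \<noteq> 0" using Pne by (simp add: S_def)
        thus "D * exp (-2 * F t) = Psi \<beta> h t * y' t"
          by (simp add: y'_def I_eq P_def[symmetric])
      qed
    qed
    have e1: "w x + 2 * x * y' x = 0" if "x \<in> {0<..<lam}" for x
    proof -
      have "P x \<noteq> 0" using Pne that by (simp add: S_def)
      thus ?thesis by (simp add: w_def y'_def I_eq q_def field_simps)
    qed
    have "P 0 \<noteq> 0" using Pne lam by (simp add: S_def)
    moreover have "y 0 = D * (1 / \<gamma>)" using Y lam by (simp add: yS J0 S_def)
    ultimately have e2: "Psi \<beta> h 0 * y' 0 - \<gamma> * y 0 = 0"
      using gam by (simp add: y'_def I0 P_def[symmetric])
    have e3: "y lam = 1" using Y lam Dlam by (simp add: yS S_def)
    show "solves_bvp lam \<beta> \<gamma> h y"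
      unfolding solves_bvp_def using c1 d1 d2 e1 e2 e3 unfolding S_def by blast
  next
    assume "solves_bvp lam \<beta> \<gamma> h y"
    then obtain y' w where c1: "continuous_on S y"
      and d1: "\<And>x. x \<in> {0..<lam} \<Longrightarrow> (y has_real_derivative y' x) (at x within S)"
      and d2: "\<And>x. x \<in> {0<..<lam} \<Longrightarrow> ((\<lambda>t. P t * y' t) has_real_derivative w x) (at x)"
      and e1: "\<And>x. x \<in> {0<..<lam} \<Longrightarrow> w x + 2 * x * y' x = 0"
      and e2: "P 0 * y' 0 - \<gamma> * y 0 = 0"
      and e3: "y lam = 1"
      unfolding solves_bvp_def S_def P_def by blast
    define v where "v = (\<lambda>t. P t * y' t * exp (2 * F t))"
    have dv: "(v has_real_derivative 0) (at x within {0<..<lam})" if x: "x \<in> {0<..<lam}" for x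
    proof -
      have A: "((\<lambda>t. P t * y' t) has_real_derivative w x) (at x)" by (rule d2[OF x])
      have B: "((\<lambda>t. exp (2 * F t)) has_real_derivative exp (2 * F x) * (2 * q x)) (at x)"
        by (intro DERIV_chain2[where f=exp and g="\<lambda>t. 2 * F t", OF DERIV_exp] DERIV_cmult dF'[OF x])
      have "(v has_real_derivative w x * exp (2 * F x) + exp (2 * F x) * (2 * q x) * (P x * y' x)) (at x)"
        unfolding v_def using DERIV_mult[OF A B] by simp
      moreover have "w x * exp (2 * F x) + exp (2 * F x) * (2 * q x) * (P x * y' x) = 0"
      proof -
        have "P x \<noteq> 0" using Pne x by (simp add: S_def)
        moreover have "w x = - 2 * x * y' x" using e1[OF x] by simp
        ultimately show ?thesis by (simp add: q_def field_simps)
      qed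
      ultimately show ?thesis by (simp add: has_field_derivative_at_within)
    qed
    obtain C where C: "\<And>t. t \<in> {0<..<lam} \<Longrightarrow> v t = C"
      using has_field_derivative_zero_constant[OF convex_real_interval(8) dv] by blast
    have y'C: "y' t = C * I t" if t: "t \<in> {0<..<lam}" for t
    proof -
      have Pt: "P t \<noteq> 0" using Pne t by (simp add: S_def)
      have ex: "exp (2 * F t) * exp (-2 * F t) = 1" by (simp flip: exp_add)
      have Cf: "P t * y' t * exp (2 * F t) = C" using C[OF t] by (simp add: v_def)
      have "y' t = y' t * (exp (2 * F t) * exp (-2 * F t))" using ex by simp
      also have "\<dots> = (P t * y' t * exp (2 * F t)) * exp (-2 * F t) / P t"
        using Pt by (simp add: field_simps)
      also have "\<dots> = C * I t" using Cf by (simp add: I_eq)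
      finally show ?thesis .
    qed
    define z where "z = (\<lambda>t. y t - C * J t)"
    have cz: "continuous_on S z" unfolding z_def by (intro continuous_intros c1 cJ)
    have dz: "DERIV z t :> 0" if t: "t \<in> {0<..<lam}" for t
    proof -
      have "(y has_real_derivative y' t) (at t)"
        using d1[of t] t at_within_interior[of t S] intS by auto
      hence "(z has_real_derivative y' t - C * I t) (at t)"
        unfolding z_def by (intro DERIV_diff DERIV_cmult dJ'[OF t])
      thus ?thesis using y'C[OF t] by simp
    qed
    have zc: "z \<eta> = z 0" if "\<eta> \<in> S" for \<eta>
    proof (cases "\<eta> = 0")
      case False
      hence "0 < \<eta>" using that by (simp add: S_def)
      thus ?thesis
        by (rule DERIV_isconst_end)
           (use that in \<open>auto intro: continuous_on_subset[OF cz] dz simp: S_def\<close>)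
    qed simp
    have z0: "z 0 = y 0" by (simp add: z_def J0)
    have lam0: "0 \<in> S" using lam by (simp add: S_def)
    have Da: "(z has_real_derivative y' 0 - C * I 0) (at 0 within S)"
      unfolding z_def using d1[of 0] lam by (intro DERIV_diff DERIV_cmult dJ[OF lam0]) auto
    have Db: "(z has_real_derivative 0) (at 0 within S)"
      by (rule has_field_derivative_transform_within[OF DERIV_const[of "y 0"] zero_less_one lam0])
         (use zc z0 in auto)
    have cb: "cbox 0 lam = S" by (simp add: S_def)
    have Va: "(z has_vector_derivative y' 0 - C * I 0) (at 0 within cbox 0 lam)"
      using Da unfolding cb has_real_derivative_iff_has_vector_derivative .
    have Vb: "(z has_vector_derivative 0) (at 0 within cbox 0 lam)"
      using Db unfolding cb has_real_derivative_iff_has_vector_derivative .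
    have "y' 0 - C * I 0 = 0"
      by (rule vector_derivative_unique_within_closed_interval[OF lam _ Va Vb]) (use lam0 cb in simp)
    hence y'0: "y' 0 = C / P 0" by (simp add: I0)
    have "P 0 \<noteq> 0" using Pne lam0 by simp
    hence y0: "y 0 = C / \<gamma>" using e2 gam y'0 by (simp add: field_simps)
    have yeq: "y \<eta> = C * (1 / \<gamma> + J \<eta>)" if "\<eta> \<in> S" for \<eta>
      using zc[OF that] z0 y0 J0 by (simp add: z_def field_simps)
    have lamS: "lam \<in> S" using lam by (simp add: S_def)
    have "C * (1 / \<gamma> + J lam) = 1" using yeq[OF lamS] e3 by simp
    hence "C = D" using Dlam
      by (metis mult.commute mult_cancel_left1 nonzero_mult_div_cancel_left one_neq_zero div_by_1 divide_self_if mult_1)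
    thus "\<forall>\<eta>\<in>S. y \<eta> = yformula lam \<beta> \<gamma> h \<eta>" using yeq by (simp add: yS)
  qed
  show ?thesis using main Kpart by (simp add: S_def)
qed

end
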